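(* Let $w\in\{a,b\}^*$, $|w|=n>1$, be conjugate to a Christoffel word, and let $p=|w|_a$ (so $\gcd(p,n)=1$). Fix $1\le k\le m<n$ and an ordered partition $P_k=(p_1,\dots,p_k)$ of $m$. Let $s_0=0$, $s_\ell=p_1+\dots+p_\ell$ for $1\le\ell\le k$, and let $i_\ell$ be the least nonnegative residue of $s_\ell p$ modulo $n$. These $k+1$ residues are distinct; list them in increasing order as $0=r_0<r_1<\dots<r_k$, set $r_{k+1}=n$, and let $\pi_\ell=r_{\ell+1}-r_\ell$ for $0\le\ell\le k$, so that $\Pi=(\pi_0,\dots,\pi_k)$ is an ordered partition of $n$ into $k+1$ parts. Order the $k+1$ varieties of $\mathcal{F}_{(m,k)}$ as $\lambda_0,\dots,\lambda_k$ according to the lexicographic order of their elements (the lexicographically least element of $\lambda_{\ell}$ precedes that of $\lambda_{\ell+1}$). Then the multiplicity of $\lambda_\ell$ is $\pi_\ell$ for each $0\le\ell\le k$. (For example, for $w=aaabaab$ and $P_3=(1,2,1)$, $\Pi=(1,4,1,1)$.)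
   Context: Alphabet $\{a<b\}$ with lexicographic order. $|u|_x$ denotes the number of occurrences of the letter $x$ in $u$. For $|w|=n$ and $1\le m<n$, the multiset $\mathcal{F}_m$ of circular factors of length $m$ of $w$ is the multiset of the length-$m$ prefixes of the $n$ rotations of $w$ (equivalently, the $n$ factors of length $m$ of the prefix of length $n+m-1$ of $ww$, counted with starting positions). Given an ordered partition $P_k=(p_1,\dots,p_k)$ of $m$ (positive integers summing to $m$), $\mathcal{F}_{(m,k)}$ is the multiset of the $u\in\mathcal{F}_m$ written as $u=u_1\cdots u_k$ with $|u_i|=p_i$. The height profile of $u$ is $\langle |u_1|_b,\dots,|u_k|_b\rangle$; partitioned factors of equal height profile are of the same variety; the multiplicity of a variety is the number of elements of the multiset $\mathcal{F}_{(m,k)}$ in it. A lower Christoffel word of slope $q/p$ with $p,q\ge1$, $\gcd(p,q)=1$, $n=p+q$, is $w_0\cdots w_{n-1}$ where $w_i=a$ if $((i+1)q\bmod n)>(iq\bmod n)$ and $w_i=b$ otherwise; a Christoffel word (of length $>1$) is a lower Christoffel word or its reversal; conjugate means rotation. It is known (Theorem card) that $\mathcal{F}_{(m,k)}$ has exactly $k+1$ varieties, each forming a block of lexicographically consecutive elements. *)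

theory Defs
  imports Main "HOL-Library.Multiset"
begin

datatype letter = A | B

definition occ :: "letter \<Rightarrow> letter list \<Rightarrow> nat" where
  "occ x u = length (filter (\<lambda>y. y = x) u)"

text \<open>Strict lexicographic order (used on words of equal length).\<close>
definition lexless :: "letter list \<Rightarrow> letter list \<Rightarrow> bool" where
  "lexless u v \<longleftrightarrow> (\<exists>i. i < length u \<and> i < length v \<and> take i u = take i v
        \<and> u ! i = A \<and> v ! i = B)"

text \<open>Lower Christoffel word of slope q/p, n = p + q.\<close>
definition lower_christoffel :: "nat \<Rightarrow> nat \<Rightarrow> letter list" where
  "lower_christoffel p q = (let n = p + q in
     map (\<lambda>i. if (i + 1) * q mod n > i * q mod n then A else B) [0..<n])"

definition christoffel :: "letter list \<Rightarrow> bool" where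
  "christoffel w \<longleftrightarrow> (\<exists>p q. p \<ge> 1 \<and> q \<ge> 1 \<and> coprime p q \<and>
      (w = lower_christoffel p q \<or> w = rev (lower_christoffel p q)))"

definition conjugate :: "letter list \<Rightarrow> letter list \<Rightarrow> bool" where
  "conjugate u v \<longleftrightarrow> (\<exists>i. v = rotate i u)"

definition circ_factors :: "letter list \<Rightarrow> nat \<Rightarrow> letter list multiset" where
  "circ_factors w m = mset (map (\<lambda>i. take m (rotate i w)) [0..<length w])"

definition psum :: "nat list \<Rightarrow> nat \<Rightarrow> nat" where
  "psum P l = sum_list (take l P)"

definition height_profile :: "nat list \<Rightarrow> letter list \<Rightarrow> nat list" where
  "height_profile P u =
     map (\<lambda>l. occ B (take (P ! l) (drop (psum P l) u))) [0..<length P]"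

definition part_factors :: "letter list \<Rightarrow> nat list \<Rightarrow> letter list multiset" where
  "part_factors w P = circ_factors w (sum_list P)"

text \<open>Height profiles occurring (the varieties, identified by their profile).\<close>
definition varieties :: "letter list \<Rightarrow> nat list \<Rightarrow> nat list set" where
  "varieties w P = height_profile P ` set_mset (part_factors w P)"

definition variety_elems :: "letter list \<Rightarrow> nat list \<Rightarrow> nat list \<Rightarrow> letter list set" where
  "variety_elems w P h = {u \<in> set_mset (part_factors w P). height_profile P u = h}"

definition multiplicity :: "letter list \<Rightarrow> nat list \<Rightarrow> nat list \<Rightarrow> nat" where
  "multiplicity w P h = size (filter_mset (\<lambda>u. height_profile P u = h) (part_factors w P))"

definition variety_min :: "letter list \<Rightarrow> nat list \<Rightarrow> nat list \<Rightarrow> letter list" where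
  "variety_min w P h = (THE u. u \<in> variety_elems w P h \<and>
       (\<forall>v \<in> variety_elems w P h. v \<noteq> u \<longrightarrow> lexless u v))"

definition variety_rank :: "letter list \<Rightarrow> nat list \<Rightarrow> nat list \<Rightarrow> nat" where
  "variety_rank w P h = card {h' \<in> varieties w P. lexless (variety_min w P h') (variety_min w P h)}"

definition residues :: "letter list \<Rightarrow> nat list \<Rightarrow> nat set" where
  "residues w P = (\<lambda>l. (psum P l * occ A w) mod length w) ` {0..length P}"

definition rseq :: "letter list \<Rightarrow> nat list \<Rightarrow> nat list" where
  "rseq w P = sorted_list_of_set (residues w P) @ [length w]"

definition pi_part :: "letter list \<Rightarrow> nat list \<Rightarrow> nat \<Rightarrow> nat" where
  "pi_part w P l = rseq w P ! (l + 1) - rseq w P ! l"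

end

theory Submission
  imports Defs
begin


definition letter_of :: "nat \<Rightarrow> nat \<Rightarrow> nat \<Rightarrow> letter" where
  "letter_of n p v = (if v < n - p then B else A)"

definition G :: "nat \<Rightarrow> nat \<Rightarrow> nat \<Rightarrow> nat \<Rightarrow> nat \<Rightarrow> letter list" where
  "G n p x a b = map (\<lambda>t. letter_of n p ((x + t*p) mod n)) [a..<b]"

lemma occ_append[simp]: "occ x (u @ v) = occ x u + occ x v"
  by (simp add: occ_def)

lemma occ_AB: "occ A u + occ B u = length u"
  proof -
  have e: "filter (\<lambda>y. y = B) u = filter (\<lambda>y. \<not> y = A) u"
  proof (rule filter_cong)
    fix y show "(y = B) = (\<not> y = A)" by (cases y) simp_all
  qed simp
  have "length (filter (\<lambda>y. y = A) u) + length (filter (\<lambda>y. \<not> y = A) u) = length u"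
    by (rule sum_length_filter_compl)
  then show ?thesis unfolding occ_def e .
qed

lemma div_step:
  fixes y p n :: nat
  assumes "p < n"
  shows "(y + p) div n = y div n + (if y mod n < n - p then 0 else 1)"
proof -
  have "(y + p) div n = y div n + p div n + (y mod n + p mod n) div n"
    by (rule div_add1_eq)
  moreover have "p div n = 0" "p mod n = p" using assms by auto
  moreover have "y mod n < n" using assms by auto
  moreover have "(y mod n + p) div n = (if y mod n < n - p then 0 else 1)"
  proof (cases "y mod n < n - p")
    case True then show ?thesis by simp
  next
    case False
    define r where "r = y mod n + p - n"
    have r1: "y mod n + p = n + r" using False assms unfolding r_def by linarith
    have r2: "r < n" using \<open>y mod n < n\<close> assms unfolding r_def by linarith
    have "(n + r) div n = 1" using r2 assms by (simp add: div_add_self1)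
    then show ?thesis using False r1 by simp
  qed
  ultimately show ?thesis by simp
qed

lemma count_G:
  assumes "p < n" "a \<le> b"
  shows "occ B (G n p x a b) + (x + b*p) div n = (b - a) + (x + a*p) div n"
  using assms(2)
proof (induction b)
  case 0 then show ?case by (simp add: G_def occ_def)
next
  case (Suc b)
  show ?case
  proof (cases "a = Suc b")
    case True then show ?thesis by (simp add: G_def occ_def)
  next
    case False
    then have ab: "a \<le> b" using Suc by simp
    have G: "G n p x a (Suc b) = G n p x a b @ [letter_of n p ((x + b*p) mod n)]"
      using ab by (simp add: G_def)
    have d: "(x + Suc b * p) div n = (x + b*p) div n + (if (x + b*p) mod n < n - p then 0 else 1)"
    proof -
      have e: "x + Suc b * p = (x+b*p)+p" by simp
      show ?thesis unfolding e by (rule div_step[OF assms(1)])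
    qed
    show ?thesis using Suc.IH[OF ab] ab unfolding G d
      by (auto simp: occ_def letter_of_def)
  qed
qed



lemma G_length[simp]: "length (G n p x a b) = b - a"
  by (simp add: G_def)

lemma G_nth: "i < b - a \<Longrightarrow> G n p x a b ! i = letter_of n p ((x + (a+i)*p) mod n)"
  by (simp add: G_def)

lemma mod_sum_const:
  fixes a b c n :: nat
  assumes "a < n" "b < n" "(a + c) mod n = (b + c) mod n"
  shows "a = b"
proof (rule ccontr)
  assume ne: "a \<noteq> b"
  have key: "\<And>a b. a < n \<Longrightarrow> b < n \<Longrightarrow> a < b \<Longrightarrow> (a + c) mod n = (b + c) mod n \<Longrightarrow> False"
  proof -
    fix a b assume h: "a < n" "b < n" "a < b" "(a + c) mod n = (b + c) mod n"
    then have "n dvd (b + c) - (a + c)" using mod_eq_dvd_iff_nat[of "a+c" "b+c" n] by simp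
    then have "n dvd b - a" by simp
    moreover have "0 < b - a" "b - a < n" using h by auto
    ultimately show False using nat_dvd_not_less by blast
  qed
  show False using ne key[OF assms(1,2)] key[OF assms(2,1)] assms(3) by (metis linorder_neqE_nat)
qed

lemma lower_G:
  assumes "p0 \<ge> 1" "q0 \<ge> 1"
  shows "lower_christoffel p0 q0 = G (p0+q0) p0 (p0+q0-1) 0 (p0+q0)"
proof (rule nth_equalityI)
  let ?n = "p0+q0"
  show "length (lower_christoffel p0 q0) = length (G ?n p0 (?n - 1) 0 ?n)"
    by (simp add: lower_christoffel_def Let_def)
  fix i assume "i < length (lower_christoffel p0 q0)"
  then have i: "i < ?n" by (simp add: lower_christoffel_def Let_def)
  define y where "y = i*q0 mod ?n"
  have yn: "y < ?n" using assms by (simp add: y_def)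
  have l: "lower_christoffel p0 q0 ! i = (if (i + 1) * q0 mod ?n > y then A else B)"
    using i by (simp add: lower_christoffel_def y_def Let_def del: upt_Suc)
  have e1: "(i+1)*q0 mod ?n = (y + q0) mod ?n"
    unfolding y_def by (simp add: mod_add_right_eq algebra_simps)
  have c1: "((i + 1) * q0 mod ?n > y) \<longleftrightarrow> y < p0"
  proof (cases "y + q0 < ?n")
    case True then show ?thesis using e1 assms by simp
  next
    case False
    then have "(y + q0) mod ?n = y + q0 - ?n" using yn
      by (simp add: le_mod_geq)
    then show ?thesis using e1 False assms yn by simp
  qed
  define v where "v = (?n - 1 + i*p0) mod ?n"
  have vn: "v < ?n" using assms by (simp add: v_def)
  have "(v + y) mod ?n = ((?n - 1 + i*p0) + i*q0) mod ?n"
    by (simp add: v_def y_def mod_add_eq)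
  also have "(?n - 1 + i*p0) + i*q0 = (?n - 1) + i * ?n" by (simp add: algebra_simps)
  also have "((?n - 1) + i * ?n) mod ?n = ?n - 1"
  proof -
    have "((?n-1) + i*?n) mod ?n = (?n-1) mod ?n" by (rule mod_mult_self1)
    then show ?thesis using assms by simp
  qed
  finally have "(v + y) mod ?n = ?n - 1" .
  then have vy: "v + y = ?n - 1"
  proof (cases "v + y < ?n")
    case True then show ?thesis using \<open>(v + y) mod ?n = ?n - 1\<close> by simp
  next
    case False
    have lt: "v + y - ?n < ?n" using vn yn by linarith
    then have "(v + y) mod ?n = v + y - ?n" using False by (simp add: le_mod_geq)
    then show ?thesis using \<open>(v + y) mod ?n = ?n - 1\<close> vn yn False by linarith
  qed
  have g: "G ?n p0 (?n - 1) 0 ?n ! i = letter_of ?n p0 v"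
    using i by (simp add: G_nth v_def)
  show "lower_christoffel p0 q0 ! i = G ?n p0 (?n - 1) 0 ?n ! i"
  proof -
    have L: "lower_christoffel p0 q0 ! i = (if y < p0 then A else B)"
      using l c1 by (simp only: )
    have R: "G ?n p0 (?n - 1) 0 ?n ! i = (if y < p0 then A else B)"
    proof (cases "y < p0")
      case True
      then have "\<not> v < ?n - p0" using vy by linarith
      then show ?thesis unfolding g letter_of_def using True by (simp only: if_True if_False)
    next
      case False
      then have "v < ?n - p0" using vy assms by linarith
      then show ?thesis unfolding g letter_of_def using False by (simp only: if_True if_False)
    qed
    show ?thesis using L R by (simp only:)
  qed
qed



lemma coprime_sum: "coprime (p0::nat) q0 \<Longrightarrow> coprime p0 (p0 + q0)"
  by (simp add: coprime_iff_gcd_eq_1)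

lemma sum_mod_lt:
  fixes u v q n :: nat
  assumes "v < n" "u < n" "(v + u) mod n = q - 1" "1 \<le> q" "q \<le> n"
  shows "v < q \<longleftrightarrow> u < q"
proof (cases "v + u < n")
  case True
  then have "v + u = q - 1" using assms(3) by simp
  then show ?thesis by linarith
next
  case False
  have lt: "v + u - n < n" using assms by linarith
  then have "(v + u) mod n = v + u - n" using False by (simp add: le_mod_geq)
  then have "v + u = q - 1 + n" using assms False by linarith
  then show ?thesis using assms by linarith
qed

lemma rev_lower_G:
  fixes p0 q0 :: nat
  assumes "p0 \<ge> 1" "q0 \<ge> 1"
  shows "rev (lower_christoffel p0 q0) = G (p0+q0) p0 0 0 (p0+q0)"
proof (rule nth_equalityI)
  let ?n = "p0+q0"
  have len: "length (lower_christoffel p0 q0) = ?n" by (simp add: lower_christoffel_def Let_def)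
  show "length (rev (lower_christoffel p0 q0)) = length (G ?n p0 0 0 ?n)"
    using len by simp
  fix i assume "i < length (rev (lower_christoffel p0 q0))"
  then have i: "i < ?n" using len by simp
  have r: "rev (lower_christoffel p0 q0) ! i = lower_christoffel p0 q0 ! (?n - 1 - i)"
    using i len by (simp add: rev_nth)
  have j: "?n - 1 - i < ?n" using i by simp
  have l: "lower_christoffel p0 q0 ! (?n - 1 - i) = letter_of ?n p0 ((?n - 1 + (?n - 1 - i)*p0) mod ?n)"
    using G_nth[of "?n - 1 - i" ?n 0 ?n p0 "?n - 1"] j lower_G[OF assms] by simp
  define v where "v = (?n - 1 + (?n - 1 - i)*p0) mod ?n"
  define u where "u = (0 + (0 + i)*p0) mod ?n"
  have g: "G ?n p0 0 0 ?n ! i = letter_of ?n p0 u" using i by (simp add: G_nth u_def)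
  have vn: "v < ?n" "u < ?n" using assms by (simp_all add: v_def u_def)
  have "(v + u) mod ?n = ((?n - 1 + (?n - 1 - i)*p0) + i*p0) mod ?n"
    by (simp add: v_def u_def mod_add_eq)
  also have "(?n - 1 + (?n - 1 - i)*p0) + i*p0 = (q0 - 1) + p0 * ?n"
  proof -
    have "(?n - 1 - i)*p0 + i*p0 = (?n - 1)*p0" using i
      by (metis add.commute diff_mult_distrib le_add_diff_inverse less_Suc_eq_le Suc_pred' add_gr_0 assms(1) le_eq_less_or_eq less_le_trans zero_less_one diff_le_self le_add1 nat_mult_le_cancel_disj mult_le_mono1)
    moreover have "?n - 1 + (?n - 1)*p0 = (q0 - 1) + p0 * ?n"
    proof -
      obtain a b where "p0 = Suc a" "q0 = Suc b" using assms by (metis Suc_le_D One_nat_def)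
      then show ?thesis by (simp add: algebra_simps)
    qed
    ultimately show ?thesis by simp
  qed
  also have "((q0 - 1) + p0 * ?n) mod ?n = q0 - 1"
  proof -
    have "((q0 - 1) + p0 * ?n) mod ?n = (q0 - 1) mod ?n" by (rule mod_mult_self1)
    then show ?thesis using assms by simp
  qed
  finally have vu: "(v + u) mod ?n = q0 - 1" .
  have iff: "v < q0 \<longleftrightarrow> u < q0" by (rule sum_mod_lt[OF vn vu]) (use assms in auto)
  show "rev (lower_christoffel p0 q0) ! i = G ?n p0 0 0 ?n ! i"
    unfolding r l g v_def[symmetric] letter_of_def using iff by simp
qed

lemma rotate_G:
  fixes n p c :: nat
  assumes "0 < n"
  shows "rotate j (G n p c 0 n) = G n p ((c + j*p) mod n) 0 n"
proof (rule nth_equalityI)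
  show "length (rotate j (G n p c 0 n)) = length (G n p ((c + j*p) mod n) 0 n)" by simp
  fix i assume "i < length (rotate j (G n p c 0 n))"
  then have i: "i < n" by simp
  have "rotate j (G n p c 0 n) ! i = G n p c 0 n ! ((j + i) mod n)"
    using i by (simp add: nth_rotate)
  also have "\<dots> = letter_of n p ((c + ((j + i) mod n)*p) mod n)"
    using assms by (simp add: G_nth)
  also have "(c + ((j + i) mod n)*p) mod n = (c + (j+i)*p) mod n"
    by (metis mod_add_right_eq mod_mult_left_eq)
  also have "\<dots> = ((c + j*p) mod n + i*p) mod n"
    by (simp add: mod_simps algebra_simps)
  also have "letter_of n p \<dots> = G n p ((c + j*p) mod n) 0 n ! i"
    using i by (simp add: G_nth)
  finally show "rotate j (G n p c 0 n) ! i = G n p ((c + j*p) mod n) 0 n ! i" .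
qed

lemma christ_struct:
  assumes "christoffel c0" "conjugate c0 w"
  shows "\<exists>p x. 0 < p \<and> p < length w \<and> coprime p (length w) \<and> x < length w
           \<and> w = G (length w) p x 0 (length w)"
proof -
  obtain p0 q0 where pq: "p0 \<ge> 1" "q0 \<ge> 1" "coprime p0 q0"
    and c0: "c0 = lower_christoffel p0 q0 \<or> c0 = rev (lower_christoffel p0 q0)"
    using assms(1) unfolding christoffel_def by blast
  let ?n = "p0 + q0"
  obtain x0 where x0: "x0 < ?n" "c0 = G ?n p0 x0 0 ?n"
  proof -
    have a: "?n - 1 < ?n" "(0::nat) < ?n" using pq by auto
    show ?thesis using c0 lower_G[OF pq(1,2)] rev_lower_G[OF pq(1,2)] a that by blast
  qed
  obtain j where w: "w = rotate j c0" using assms(2) unfolding conjugate_def by blast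
  have wG: "w = G ?n p0 ((x0 + j*p0) mod ?n) 0 ?n"
    using w x0(2) rotate_G[where n="?n" and p=p0 and c=x0 and j=j] pq by simp
  have lw: "length w = ?n" using wG by simp
  show ?thesis
    apply (rule exI[of _ p0], rule exI[of _ "(x0 + j*p0) mod ?n"])
    using pq lw wG coprime_sum[OF pq(3)] by simp
qed



lemma mod_inj_step:
  fixes n p z a b :: nat
  assumes "coprime p n" "a < b" "b - a < n"
  shows "(z + a*p) mod n \<noteq> (z + b*p) mod n"
proof
  assume h: "(z + a*p) mod n = (z + b*p) mod n"
  have "n dvd (z + b*p) - (z + a*p)" using mod_eq_dvd_iff_nat[of "z+a*p" "z+b*p" n] h assms(2)
    by simp
  moreover have "(z + b*p) - (z + a*p) = (b - a) * p" by (simp add: diff_mult_distrib)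
  ultimately have "n dvd (b - a) * p" by simp
  then have "n dvd (b - a)" using assms(1)
    by (metis coprime_commute coprime_dvd_mult_left_iff)
  moreover have "0 < b - a" using assms by simp
  ultimately show False using assms(3) nat_dvd_not_less by blast
qed

locale setting =
  fixes n p c :: nat and w :: "letter list" and P :: "nat list" and k m :: nat
  assumes p0: "0 < p" and pn: "p < n" and cop: "coprime p n" and cn: "c < n"
    and wG: "w = G n p c 0 n"
    and lP: "length P = k" and Ppos: "\<forall>x \<in> set P. x > 0" and sP: "sum_list P = m"
    and k1: "1 \<le> k" and km: "k \<le> m" and mn: "m < n"
begin

lemma n0: "0 < n" using pn by simp

lemma lw: "length w = n" using wG by simp

lemma occA: "occ A w = p"
proof -
  have "occ B w + (c + n*p) div n = (n - 0) + (c + 0*p) div n"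
    unfolding wG by (rule count_G[OF pn]) simp
  moreover have "(c + n*p) div n = p" using cn n0 by simp
  moreover have "c div n = 0" using cn by simp
  ultimately have "occ B w = n - p" by simp
  then show ?thesis using occ_AB[of w] lw pn by simp
qed

abbreviation ps :: "nat \<Rightarrow> nat" where "ps l \<equiv> psum P l"

lemma ps0: "ps 0 = 0" by (simp add: psum_def)

lemma psSuc: "l < k \<Longrightarrow> ps (Suc l) = ps l + P ! l"
  using lP by (simp add: psum_def take_Suc_conv_app_nth)

lemma psk: "ps k = m" using lP sP by (simp add: psum_def)

lemma ps_pos: "l < k \<Longrightarrow> P ! l > 0" using Ppos lP by simp

lemma ps_mono: "l1 < l2 \<Longrightarrow> l2 \<le> k \<Longrightarrow> ps l1 < ps l2"
proof (induction l2)
  case 0 then show ?case by simp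
next
  case (Suc l2)
  have "ps l2 < ps (Suc l2)" using psSuc[of l2] ps_pos[of l2] Suc.prems by simp
  then show ?case using Suc by (cases "l1 = l2") auto
qed

lemma ps_le: "l \<le> k \<Longrightarrow> ps l \<le> m"
  using ps_mono[of l k] psk by (cases "l = k") auto

definition R :: "nat set" where "R = residues w P"

lemma R_def2: "R = (\<lambda>l. (ps l * p) mod n) ` {0..k}"
  unfolding R_def residues_def occA lw lP by simp

lemma R_inj: "inj_on (\<lambda>l. (ps l * p) mod n) {0..k}"
proof (rule inj_onI, rule ccontr)
  fix a b assume ab: "a \<in> {0..k}" "b \<in> {0..k}" "(ps a * p) mod n = (ps b * p) mod n" "a \<noteq> b"
  have key: "\<And>a b. a \<le> k \<Longrightarrow> b \<le> k \<Longrightarrow> a < b \<Longrightarrow> (ps a * p) mod n \<noteq> (ps b * p) mod n"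
  proof -
    fix a b :: nat assume h: "a \<le> k" "b \<le> k" "a < b"
    have "ps a < ps b" using ps_mono h by simp
    moreover have "ps b - ps a < n" using ps_le[of b] h mn by linarith
    ultimately show "(ps a * p) mod n \<noteq> (ps b * p) mod n"
      using mod_inj_step[OF cop, of "ps a" "ps b" 0] by simp
  qed
  show False using ab key[of a b] key[of b a] by (metis atLeastAtMost_iff linorder_neqE_nat)
qed

lemma card_R: "card R = k + 1"
  unfolding R_def2 using card_image[OF R_inj] by simp

lemma finR: "finite R" unfolding R_def2 by simp

lemma R_lt: "r \<in> R \<Longrightarrow> r < n" unfolding R_def2 using n0 by auto

lemma zero_R: "0 \<in> R" unfolding R_def2 using ps0 by force

end


context setting begin

definition F :: "nat \<Rightarrow> letter list" where "F z = G n p z 0 m"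

lemma take_G: "b \<le> n \<Longrightarrow> take b (G n p z 0 n) = G n p z 0 b"
  by (simp add: G_def take_map)

lemma sigma_inj: "inj_on (\<lambda>i. (c + i*p) mod n) {0..<n}"
proof (rule inj_onI, rule ccontr)
  fix a b assume ab: "a \<in> {0..<n}" "b \<in> {0..<n}" "(c + a*p) mod n = (c + b*p) mod n" "a \<noteq> b"
  have key: "\<And>a b. a < n \<Longrightarrow> b < n \<Longrightarrow> a < b \<Longrightarrow> (c + a*p) mod n \<noteq> (c + b*p) mod n"
  proof -
    fix a b :: nat assume h: "a < n" "b < n" "a < b"
    then have "b - a < n" by linarith
    then show "(c + a*p) mod n \<noteq> (c + b*p) mod n" using mod_inj_step[OF cop h(3)] by simp
  qed
  show False using ab key[of a b] key[of b a] by (metis atLeastLessThan_iff linorder_neqE_nat)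
qed

lemma sigma_surj: "(\<lambda>i. (c + i*p) mod n) ` {0..<n} = {0..<n}"
proof (rule card_subset_eq)
  show "finite {0..<n}" by simp
  show "(\<lambda>i. (c + i*p) mod n) ` {0..<n} \<subseteq> {0..<n}" using n0 by auto
  show "card ((\<lambda>i. (c + i*p) mod n) ` {0..<n}) = card {0..<n}"
    using card_image[OF sigma_inj] by simp
qed

lemma circ: "circ_factors w m = mset (map F [0..<n])"
proof -
  have "map (\<lambda>i. take m (rotate i w)) [0..<n] = map F (map (\<lambda>i. (c + i*p) mod n) [0..<n])"
  proof (rule nth_equalityI)
    fix i assume "i < length (map (\<lambda>i. take m (rotate i w)) [0..<n])"
    then have i: "i < n" by simp
    have "take m (rotate i w) = F ((c + i*p) mod n)"
      unfolding wG rotate_G[OF n0] F_def using take_G mn by simp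
    then show "map (\<lambda>i. take m (rotate i w)) [0..<n] ! i = map F (map (\<lambda>i. (c + i*p) mod n) [0..<n]) ! i"
      using i by simp
  qed simp
  moreover have "mset (map (\<lambda>i. (c + i*p) mod n) [0..<n]) = mset [0..<n]"
  proof -
    have "distinct (map (\<lambda>i. (c + i*p) mod n) [0..<n])"
      using sigma_inj by (simp add: distinct_map)
    moreover have "set (map (\<lambda>i. (c + i*p) mod n) [0..<n]) = set [0..<n]"
      using sigma_surj by simp
    ultimately show ?thesis using set_eq_iff_mset_eq_distinct by (metis distinct_upt)
  qed
  ultimately show ?thesis unfolding circ_factors_def lw
    by (metis mset_map)
qed

definition HP :: "nat \<Rightarrow> nat list" where "HP z = height_profile P (F z)"

definition Dv :: "nat \<Rightarrow> nat \<Rightarrow> nat" where "Dv l z = (z + ps l * p) div n"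

lemma HP_comp: "l < k \<Longrightarrow> HP z ! l = occ B (G n p z (ps l) (ps (Suc l)))"
proof -
  assume l: "l < k"
  have le: "ps l + P!l \<le> m" using psSuc[OF l] ps_le[of "Suc l"] l by simp
  have "take (P ! l) (drop (ps l) (F z)) = G n p z (ps l) (ps l + P!l)"
    unfolding F_def G_def using le by (simp add: take_map drop_map)
  then show ?thesis unfolding HP_def height_profile_def using l lP psSuc[OF l] by simp
qed

lemma HP_len: "length (HP z) = k" unfolding HP_def height_profile_def using lP by simp

lemma HP_eqn: "l < k \<Longrightarrow> HP z ! l + Dv (Suc l) z = P ! l + Dv l z"
proof -
  assume l: "l < k"
  have a: "ps l \<le> ps (Suc l)" using psSuc[OF l] by simp
  show ?thesis using count_G[OF pn a, of z] HP_comp[OF l] psSuc[OF l] unfolding Dv_def by simp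
qed

lemma HP_iff_Dv:
  assumes "z < n" "z' < n"
  shows "HP z = HP z' \<longleftrightarrow> (\<forall>l\<le>k. Dv l z = Dv l z')"
proof
  assume h: "HP z = HP z'"
  have "l \<le> k \<Longrightarrow> Dv l z = Dv l z'" for l
  proof (induction l)
    case 0 then show ?case using assms by (simp add: Dv_def ps0)
  next
    case (Suc l)
    then have l: "l < k" by simp
    show ?case using HP_eqn[OF l, of z] HP_eqn[OF l, of z'] h Suc by simp
  qed
  then show "\<forall>l\<le>k. Dv l z = Dv l z'" by blast
next
  assume h: "\<forall>l\<le>k. Dv l z = Dv l z'"
  show "HP z = HP z'"
  proof (rule nth_equalityI)
    show "length (HP z) = length (HP z')" by (simp add: HP_len)
    fix l assume "l < length (HP z)"
    then have l: "l < k" by (simp add: HP_len)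
    show "HP z ! l = HP z' ! l" using HP_eqn[OF l, of z] HP_eqn[OF l, of z'] h l by simp
  qed
qed

lemma Dv_split:
  assumes "z < n"
  shows "Dv l z = ps l * p div n + (if n \<le> z + (ps l * p) mod n then 1 else 0)"
proof -
  let ?S = "ps l * p"
  have "(z + ?S) div n = z div n + ?S div n + (z mod n + ?S mod n) div n"
    by (rule div_add1_eq)
  moreover have "z div n = 0" "z mod n = z" using assms by auto
  moreover have "(z + ?S mod n) div n = (if n \<le> z + ?S mod n then 1 else 0)"
  proof (cases "n \<le> z + ?S mod n")
    case True
    define r where "r = z + ?S mod n - n"
    have r1: "z + ?S mod n = n + r" using True unfolding r_def by linarith
    have "?S mod n < n" using n0 by simp
    then have r2: "r < n" using assms unfolding r_def by linarith
    have "(n + r) div n = 1" using r2 n0 by (simp add: div_add_self1)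
    then show ?thesis using True r1 by simp
  next
    case False then show ?thesis by simp
  qed
  ultimately show ?thesis unfolding Dv_def by simp
qed

definition Ev :: "nat \<Rightarrow> nat set" where "Ev z = {r \<in> R. n \<le> z + r}"

lemma HP_iff_Ev:
  assumes "z < n" "z' < n"
  shows "HP z = HP z' \<longleftrightarrow> Ev z = Ev z'"
proof -
  have "HP z = HP z' \<longleftrightarrow> (\<forall>l\<le>k. (n \<le> z + (ps l * p) mod n) = (n \<le> z' + (ps l * p) mod n))"
    unfolding HP_iff_Dv[OF assms] Dv_split[OF assms(1)] Dv_split[OF assms(2)] by (simp, blast)
  also have "\<dots> \<longleftrightarrow> (\<forall>r\<in>R. (n \<le> z + r) = (n \<le> z' + r))"
    unfolding R_def2 by auto
  also have "\<dots> \<longleftrightarrow> Ev z = Ev z'"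
    unfolding Ev_def by blast
  finally show ?thesis .
qed

end


context setting begin

definition kap :: "nat \<Rightarrow> nat" where "kap z = card (Ev z)"

lemma finEv: "finite (Ev z)" unfolding Ev_def using finR by simp

lemma Ev_mono: "z \<le> z' \<Longrightarrow> Ev z \<subseteq> Ev z'" unfolding Ev_def by auto

lemma kap_mono: "z \<le> z' \<Longrightarrow> kap z \<le> kap z'"
  unfolding kap_def using Ev_mono finEv by (simp add: card_mono)

lemma Ev_iff_kap: "Ev z = Ev z' \<longleftrightarrow> kap z = kap z'"
proof
  assume "kap z = kap z'"
  then show "Ev z = Ev z'"
  proof (cases "z \<le> z'")
    case True then show ?thesis using \<open>kap z = kap z'\<close> Ev_mono[OF True] finEv
      unfolding kap_def by (metis card_subset_eq)
  next
    case False then have "z' \<le> z" by simp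
    then show ?thesis using \<open>kap z = kap z'\<close> Ev_mono finEv
      unfolding kap_def by (metis card_subset_eq)
  qed
qed (simp add: kap_def)

lemma HP_iff_kap: "z < n \<Longrightarrow> z' < n \<Longrightarrow> HP z = HP z' \<longleftrightarrow> kap z = kap z'"
  using HP_iff_Ev Ev_iff_kap by simp

lemma kap_le: "z < n \<Longrightarrow> kap z \<le> k"
proof -
  assume z: "z < n"
  have "Ev z \<subseteq> R - {0}" unfolding Ev_def using z by auto
  then have "kap z \<le> card (R - {0})" unfolding kap_def using finR by (simp add: card_mono)
  also have "\<dots> = k" using card_R zero_R finR by simp
  finally show ?thesis .
qed

definition rs :: "nat list" where "rs = sorted_list_of_set R"

lemma rs_len: "length rs = k + 1" unfolding rs_def using card_R by simp
lemma rs_set: "set rs = R" unfolding rs_def using finR by simp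
lemma rs_sorted: "sorted_wrt (<) rs" unfolding rs_def by (rule strict_sorted_list_of_set)
lemma rs_less: "i < j \<Longrightarrow> j \<le> k \<Longrightarrow> rs ! i < rs ! j"
  using sorted_wrt_nth_less[OF rs_sorted] rs_len by simp
lemma rs_le: "i \<le> j \<Longrightarrow> j \<le> k \<Longrightarrow> rs ! i \<le> rs ! j"
  using rs_less by (cases "i = j") (auto simp: order_less_imp_le)
lemma rs_in: "i \<le> k \<Longrightarrow> rs ! i \<in> R" using rs_set rs_len nth_mem by (metis Suc_eq_plus1 le_imp_less_Suc)
lemma rs_lt_n: "i \<le> k \<Longrightarrow> rs ! i < n" using rs_in R_lt by blast

lemma rseq_eq: "rseq w P = rs @ [n]" unfolding rseq_def rs_def R_def lw by simp

lemma rseq_nth_low: "i \<le> k \<Longrightarrow> rseq w P ! i = rs ! i"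
  unfolding rseq_eq using rs_len by (simp add: nth_append)
lemma rseq_nth_top: "rseq w P ! (k+1) = n"
  unfolding rseq_eq using rs_len by (simp add: nth_append)
lemma rseq_le_n: "i \<le> k + 1 \<Longrightarrow> rseq w P ! i \<le> n"
  using rseq_nth_low rseq_nth_top rs_lt_n by (cases "i = k+1") (auto simp: order_less_imp_le)
lemma rseq_strict: "i \<le> k \<Longrightarrow> rseq w P ! i < rseq w P ! (i+1)"
proof -
  assume i: "i \<le> k"
  show ?thesis
  proof (cases "i = k")
    case True then show ?thesis using rseq_nth_low rseq_nth_top rs_lt_n by simp
  next
    case False then show ?thesis using i rseq_nth_low rs_less by simp
  qed
qed

lemma kap_ge_iff:
  assumes i: "i \<le> k + 1" and z: "z < n"
  shows "k + 1 - i \<le> kap z \<longleftrightarrow> n \<le> z + rseq w P ! i"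
proof (cases "i = k + 1")
  case True then show ?thesis using rseq_nth_top by simp
next
  case False
  then have ik: "i \<le> k" using i by simp
  have ri: "rseq w P ! i = rs ! i" using rseq_nth_low[OF ik] .
  show ?thesis
  proof
    assume h: "k + 1 - i \<le> kap z"
    show "n \<le> z + rseq w P ! i"
    proof (rule ccontr)
      assume "\<not> n \<le> z + rseq w P ! i"
      then have lt: "z + rs ! i < n" using ri by simp
      have "Ev z \<subseteq> (\<lambda>j. rs ! j) ` {i+1..k}"
      proof
        fix r assume r: "r \<in> Ev z"
        then have "r \<in> set rs" using rs_set unfolding Ev_def by auto
        then obtain j where j: "j < k + 1" "r = rs ! j" using rs_len by (metis in_set_conv_nth)
        have "i < j"
        proof (rule ccontr)
          assume "\<not> i < j"
          then have "rs ! j \<le> rs ! i" using rs_le ik by simp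
          then show False using r j lt unfolding Ev_def by auto
        qed
        then show "r \<in> (\<lambda>j. rs ! j) ` {i+1..k}" using j by auto
      qed
      then have "kap z \<le> card ((\<lambda>j. rs ! j) ` {i+1..k})" unfolding kap_def
        by (simp add: card_mono)
      also have "\<dots> \<le> card {i+1..k}" by (rule card_image_le) simp
      finally have "kap z \<le> k - i" by simp
      then show False using h ik by simp
    qed
  next
    assume h: "n \<le> z + rseq w P ! i"
    have sub: "(\<lambda>j. rs ! j) ` {i..k} \<subseteq> Ev z"
    proof
      fix r assume "r \<in> (\<lambda>j. rs ! j) ` {i..k}"
      then obtain j where j: "i \<le> j" "j \<le> k" "r = rs ! j" by auto
      then have "rs ! i \<le> r" using rs_le by simp
      then show "r \<in> Ev z" using h ri rs_in j unfolding Ev_def by auto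
    qed
    have inj: "inj_on (\<lambda>j. rs ! j) {i..k}"
    proof (rule inj_onI, rule ccontr)
      fix a b assume ab: "a \<in> {i..k}" "b \<in> {i..k}" "rs ! a = rs ! b" "a \<noteq> b"
      then show False using rs_less[of a b] rs_less[of b a] by (metis atLeastAtMost_iff less_irrefl linorder_neqE_nat)
    qed
    have "card ((\<lambda>j. rs ! j) ` {i..k}) = k + 1 - i" using card_image[OF inj] by simp
    then show "k + 1 - i \<le> kap z" unfolding kap_def using card_mono[OF finEv sub] by simp
  qed
qed

lemma card_kap_ge:
  assumes j: "j \<le> k + 1"
  shows "card {z. z < n \<and> j \<le> kap z} = rseq w P ! (k + 1 - j)"
proof -
  let ?v = "rseq w P ! (k + 1 - j)"
  have v: "?v \<le> n" using rseq_le_n by simp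
  have "{z. z < n \<and> j \<le> kap z} = {z. z < n \<and> n \<le> z + ?v}"
    using kap_ge_iff[of "k + 1 - j"] j by auto
  also have "\<dots> = {n - ?v..<n}" using v by auto
  finally show ?thesis using v by simp
qed

lemma card_kap_eq:
  assumes j: "j \<le> k"
  shows "card {z. z < n \<and> kap z = j} = rseq w P ! (k + 1 - j) - rseq w P ! (k - j)"
proof -
  have "{z. z < n \<and> kap z = j} = {z. z < n \<and> j \<le> kap z} - {z. z < n \<and> Suc j \<le> kap z}" by auto
  moreover have "{z. z < n \<and> Suc j \<le> kap z} \<subseteq> {z. z < n \<and> j \<le> kap z}" by auto
  moreover have "finite {z. z < n \<and> Suc j \<le> kap z}" by simp
  ultimately have "card {z. z < n \<and> kap z = j} = card {z. z < n \<and> j \<le> kap z} - card {z. z < n \<and> Suc j \<le> kap z}"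
    by (simp add: card_Diff_subset)
  moreover have "k + 1 - Suc j = k - j" by simp
  ultimately show ?thesis using card_kap_ge[of j] card_kap_ge[of "Suc j"] j by simp
qed

lemma class_nonempty:
  assumes j: "j \<le> k"
  shows "{z. z < n \<and> kap z = j} \<noteq> {}"
proof -
  have "rseq w P ! (k - j) < rseq w P ! (k - j + 1)" using rseq_strict[of "k - j"] by simp
  moreover have "k - j + 1 = k + 1 - j" using j by simp
  ultimately have "card {z. z < n \<and> kap z = j} > 0" using card_kap_eq[OF j] by simp
  then show ?thesis by (metis card.empty less_irrefl)
qed

end


lemma lexless_irrefl: "\<not> lexless u u"
  unfolding lexless_def by auto

lemma lexless_asym: "lexless u v \<Longrightarrow> \<not> lexless v u"
proof
  assume "lexless u v" "lexless v u"
  then obtain i j where i: "i < length u" "i < length v" "take i u = take i v" "u ! i = A" "v ! i = B"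
    and j: "j < length v" "j < length u" "take j v = take j u" "v ! j = A" "u ! j = B"
    unfolding lexless_def by blast
  consider "i < j" | "j < i" | "i = j" by linarith
  then show False
  proof cases
    case 1
    have "take j u ! i = take j v ! i" using j(3) by simp
    then have "u ! i = v ! i" using 1 by simp
    then show False using i by simp
  next
    case 2
    have "take i u ! j = take i v ! j" using i(3) by simp
    then have "u ! j = v ! j" using 2 by simp
    then show False using j by simp
  next
    case 3 then show False using i j by simp
  qed
qed

lemma mod_step:
  fixes v p n :: nat
  assumes "v < n" "p < n"
  shows "(v + p) mod n = (if v < n - p then v + p else v + p - n)"
proof (cases "v < n - p")
  case True then show ?thesis by simp
next
  case False
  have lt: "v + p - n < n" using assms by linarith
  then show ?thesis using False by (simp add: le_mod_geq)
qed

context setting begin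

lemma F_len[simp]: "length (F z) = m" unfolding F_def by simp

lemma F_nth: "t < m \<Longrightarrow> F z ! t = letter_of n p ((z + t*p) mod n)"
  unfolding F_def by (simp add: G_nth)

lemma lex_mono:
  assumes yz: "y < z" "z < n" and ne: "F z \<noteq> F y"
  shows "lexless (F z) (F y)"
proof -
  have ex: "\<exists>t. t < m \<and> F z ! t \<noteq> F y ! t"
  proof (rule ccontr)
    assume "\<not> (\<exists>t. t < m \<and> F z ! t \<noteq> F y ! t)"
    then have "F z = F y" by (intro nth_equalityI) auto
    then show False using ne by simp
  qed
  define i where "i = (LEAST t. t < m \<and> F z ! t \<noteq> F y ! t)"
  have i: "i < m" "F z ! i \<noteq> F y ! i" using LeastI_ex[OF ex] unfolding i_def by auto
  have before: "t < i \<Longrightarrow> F z ! t = F y ! t" for t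
    using not_less_Least[of t "\<lambda>t. t < m \<and> F z ! t \<noteq> F y ! t"] i(1) unfolding i_def[symmetric] by auto
  have inv: "t \<le> i \<Longrightarrow> (z + t*p) mod n = (y + t*p) mod n + (z - y)" for t
  proof (induction t)
    case 0 then show ?case using yz by simp
  next
    case (Suc t)
    let ?a = "(z + t*p) mod n" and ?b = "(y + t*p) mod n"
    have tl: "t < i" using Suc.prems by simp
    have ab: "?a = ?b + (z - y)" using Suc tl by simp
    have eq: "F z ! t = F y ! t" using before[OF tl] .
    have lets: "(?a < n - p) = (?b < n - p)"
    proof -
      have "letter_of n p ?a = letter_of n p ?b" using eq F_nth tl i(1) by simp
      then show ?thesis unfolding letter_of_def by (auto split: if_splits)
    qed
    have an: "?a < n" "?b < n" using n0 by auto
    have sa: "(z + Suc t * p) mod n = (?a + p) mod n" by (simp add: mod_simps add_ac)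
    have sb: "(y + Suc t * p) mod n = (?b + p) mod n" by (simp add: mod_simps add_ac)
    show ?case unfolding sa sb mod_step[OF an(1) pn] mod_step[OF an(2) pn]
      using lets ab an yz by auto
  qed
  let ?a = "(z + i*p) mod n" and ?b = "(y + i*p) mod n"
  have ab: "?a = ?b + (z - y)" using inv by simp
  have diff: "letter_of n p ?a \<noteq> letter_of n p ?b" using i F_nth by simp
  have "?b < n - p" "\<not> ?a < n - p"
    using diff ab yz unfolding letter_of_def by (auto split: if_splits)
  then have "F z ! i = A" "F y ! i = B" using F_nth i(1) unfolding letter_of_def by auto
  moreover have "take i (F z) = take i (F y)"
    by (rule nth_equalityI) (use before i(1) in auto)
  ultimately show ?thesis unfolding lexless_def using i(1) by auto
qed

end


context setting begin

definition X :: "nat \<Rightarrow> nat" where "X j = Max {z. z < n \<and> kap z = j}"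

lemma X_props:
  assumes "j \<le> k"
  shows "X j < n" "kap (X j) = j" "\<And>z. z < n \<Longrightarrow> kap z = j \<Longrightarrow> z \<le> X j"
proof -
  have fin: "finite {z. z < n \<and> kap z = j}" by simp
  have mem: "X j \<in> {z. z < n \<and> kap z = j}"
    unfolding X_def using Max_in[OF fin class_nonempty[OF assms]] .
  then show "X j < n" "kap (X j) = j" by auto
  fix z assume "z < n" "kap z = j"
  then show "z \<le> X j" unfolding X_def using fin by (simp add: Max_ge)
qed

lemma pf: "part_factors w P = mset (map F [0..<n])"
  unfolding part_factors_def sP circ ..

lemma pf_set: "set_mset (part_factors w P) = F ` {0..<n}"
  unfolding pf by simp

lemma hpF: "height_profile P (F z) = HP z" unfolding HP_def ..

lemma mult_eq: "multiplicity w P h = card {z. z < n \<and> HP z = h}"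
proof -
  have "multiplicity w P h = length (filter (\<lambda>u. height_profile P u = h) (map F [0..<n]))"
    unfolding multiplicity_def pf mset_filter[symmetric] size_mset ..
  also have "\<dots> = length (filter (\<lambda>z. HP z = h) [0..<n])"
    by (simp add: filter_map comp_def hpF)
  also have "\<dots> = card {z. z < n \<and> HP z = h}"
  proof -
    have "{i. i < n \<and> HP ([0..<n] ! i) = h} = {z. z < n \<and> HP z = h}" by auto
    then show ?thesis by (simp add: length_filter_conv_card)
  qed
  finally show ?thesis .
qed

lemma varieties_eq: "varieties w P = HP ` {0..<n}"
  unfolding varieties_def pf_set image_image hpF ..

lemma velems: "j \<le> k \<Longrightarrow> variety_elems w P (HP (X j)) = F ` {z. z < n \<and> kap z = j}"
proof -
  assume j: "j \<le> k"
  have "variety_elems w P (HP (X j)) = {u \<in> F ` {0..<n}. height_profile P u = HP (X j)}"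
    unfolding variety_elems_def pf_set ..
  also have "\<dots> = F ` {z. z < n \<and> kap z = j}"
    using HP_iff_kap X_props[OF j] by (auto simp: hpF)
  finally show ?thesis .
qed

lemma vmin: "j \<le> k \<Longrightarrow> variety_min w P (HP (X j)) = F (X j)"
proof -
  assume j: "j \<le> k"
  let ?V = "variety_elems w P (HP (X j))"
  have inV: "F (X j) \<in> ?V" unfolding velems[OF j] using X_props[OF j] by auto
  have prp: "\<forall>v \<in> ?V. v \<noteq> F (X j) \<longrightarrow> lexless (F (X j)) v"
  proof (intro ballI impI)
    fix v assume v: "v \<in> ?V" "v \<noteq> F (X j)"
    then obtain z where z: "z < n" "kap z = j" "v = F z" unfolding velems[OF j] by auto
    have "z \<le> X j" using X_props(3)[OF j z(1,2)] .
    moreover have "z \<noteq> X j" using v z by auto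
    ultimately have "z < X j" by simp
    then show "lexless (F (X j)) v" using lex_mono[of z "X j"] X_props[OF j] v z by auto
  qed
  show ?thesis unfolding variety_min_def
  proof (rule the_equality)
    show "F (X j) \<in> ?V \<and> (\<forall>v \<in> ?V. v \<noteq> F (X j) \<longrightarrow> lexless (F (X j)) v)" using inV prp by (rule conjI)
    fix u assume u: "u \<in> ?V \<and> (\<forall>v \<in> ?V. v \<noteq> u \<longrightarrow> lexless u v)"
    show "u = F (X j)"
    proof (rule ccontr)
      assume ne: "u \<noteq> F (X j)"
      have uV: "u \<in> ?V" and uall: "\<forall>v \<in> ?V. v \<noteq> u \<longrightarrow> lexless u v" using u by auto
      have "lexless u (F (X j))" using uall inV ne by auto
      moreover have "lexless (F (X j)) u" using prp uV ne by auto
      ultimately show False using lexless_asym by blast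
    qed
  qed
qed

lemma ordX: "j1 < j2 \<Longrightarrow> j2 \<le> k \<Longrightarrow> lexless (F (X j2)) (F (X j1))"
proof -
  assume h: "j1 < j2" "j2 \<le> k"
  have j1: "j1 \<le> k" using h by simp
  have "X j1 < X j2"
  proof (rule ccontr)
    assume "\<not> X j1 < X j2"
    then have "kap (X j2) \<le> kap (X j1)" using kap_mono by simp
    then show False using X_props(2)[OF j1] X_props(2)[OF h(2)] h by simp
  qed
  moreover have "F (X j2) \<noteq> F (X j1)"
  proof
    assume "F (X j2) = F (X j1)"
    then have "HP (X j2) = HP (X j1)" unfolding HP_def by simp
    then have "kap (X j2) = kap (X j1)" using HP_iff_kap X_props(1)[OF j1] X_props(1)[OF h(2)] by simp
    then show False using X_props(2)[OF j1] X_props(2)[OF h(2)] h by simp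
  qed
  ultimately show ?thesis using lex_mono X_props(1)[OF h(2)] by simp
qed

lemma not_ordX: "j' \<le> j \<Longrightarrow> j \<le> k \<Longrightarrow> \<not> lexless (F (X j')) (F (X j))"
proof -
  assume h: "j' \<le> j" "j \<le> k"
  show ?thesis
  proof (cases "j' = j")
    case True then show ?thesis using lexless_irrefl by simp
  next
    case False
    then have "lexless (F (X j)) (F (X j'))" using ordX h by simp
    then show ?thesis using lexless_asym by blast
  qed
qed

lemma HP_X_class: "z < n \<Longrightarrow> HP z = HP (X (kap z))"
  using HP_iff_kap X_props kap_le by simp

lemma rank: "j \<le> k \<Longrightarrow> variety_rank w P (HP (X j)) = k - j"
proof -
  assume j: "j \<le> k"
  have "{h' \<in> varieties w P. lexless (variety_min w P h') (variety_min w P (HP (X j)))}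
        = (\<lambda>j'. HP (X j')) ` {j+1..k}"
  proof
    show "{h' \<in> varieties w P. lexless (variety_min w P h') (variety_min w P (HP (X j)))}
        \<subseteq> (\<lambda>j'. HP (X j')) ` {j+1..k}"
    proof
      fix h' assume "h' \<in> {h' \<in> varieties w P. lexless (variety_min w P h') (variety_min w P (HP (X j)))}"
      then obtain z where z: "z < n" "h' = HP z"
        and lx: "lexless (variety_min w P h') (variety_min w P (HP (X j)))"
        unfolding varieties_eq by auto
      let ?j' = "kap z"
      have j': "?j' \<le> k" using kap_le z(1) .
      have h'e: "h' = HP (X ?j')" using HP_X_class z by simp
      have "lexless (F (X ?j')) (F (X j))" using lx unfolding h'e vmin[OF j'] vmin[OF j] .
      then have "j < ?j'" using not_ordX[of ?j' j] j by (meson not_le)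
      then show "h' \<in> (\<lambda>j'. HP (X j')) ` {j+1..k}" using h'e j' by auto
    qed
  next
    show "(\<lambda>j'. HP (X j')) ` {j+1..k}
        \<subseteq> {h' \<in> varieties w P. lexless (variety_min w P h') (variety_min w P (HP (X j)))}"
    proof
      fix h' assume "h' \<in> (\<lambda>j'. HP (X j')) ` {j+1..k}"
      then obtain j' where j0: "j' \<in> {j+1..k}" "h' = HP (X j')" by (rule imageE)
      then have j': "j < j'" "j' \<le> k" "h' = HP (X j')" by auto
      have "h' \<in> varieties w P" unfolding varieties_eq using j' X_props(1)[OF j'(2)] by auto
      moreover have "lexless (variety_min w P h') (variety_min w P (HP (X j)))"
        unfolding j'(3) vmin[OF j'(2)] vmin[OF j] using ordX j' by simp
      ultimately show "h' \<in> {h' \<in> varieties w P. lexless (variety_min w P h') (variety_min w P (HP (X j)))}"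
        by simp
    qed
  qed
  moreover have "inj_on (\<lambda>j'. HP (X j')) {j+1..k}"
  proof (rule inj_onI)
    fix a b assume ab: "a \<in> {j+1..k}" "b \<in> {j+1..k}" "HP (X a) = HP (X b)"
    then have "kap (X a) = kap (X b)" using HP_iff_kap X_props(1) by simp
    then show "a = b" using X_props(2) ab by simp
  qed
  ultimately show ?thesis unfolding variety_rank_def by (simp add: card_image)
qed

lemma main:
  shows "card (residues w P) = k + 1 \<and>
         (\<forall>l \<le> k. \<exists>h \<in> varieties w P.
            variety_rank w P h = l \<and> multiplicity w P h = pi_part w P l)"
proof (intro conjI allI impI)
  show "card (residues w P) = k + 1" using card_R unfolding R_def .
  fix l assume l: "l \<le> k"
  let ?j = "k - l"
  have j: "?j \<le> k" by simp
  have mem: "HP (X ?j) \<in> varieties w P" unfolding varieties_eq using X_props(1)[OF j] by auto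
  have r: "variety_rank w P (HP (X ?j)) = l" using rank[OF j] l by simp
  have "multiplicity w P (HP (X ?j)) = card {z. z < n \<and> kap z = ?j}"
    unfolding mult_eq using HP_iff_kap X_props[OF j] by metis
  also have "\<dots> = rseq w P ! (k + 1 - ?j) - rseq w P ! (k - ?j)" using card_kap_eq[OF j] .
  also have "\<dots> = pi_part w P l" unfolding pi_part_def using l by simp
  finally show "\<exists>h \<in> varieties w P. variety_rank w P h = l \<and> multiplicity w P h = pi_part w P l"
    using mem r by blast
qed

end

theorem mainTheorem3:
  fixes w :: "letter list" and P :: "nat list" and k m :: nat
  assumes "length w > 1"
    and "\<exists>c. christoffel c \<and> conjugate c w"
    and "length P = k" and "\<forall>x \<in> set P. x > 0" and "sum_list P = m"
    and "1 \<le> k" and "k \<le> m" and "m < length w"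
  shows "card (residues w P) = k + 1 \<and>
         (\<forall>l \<le> k. \<exists>h \<in> varieties w P.
            variety_rank w P h = l \<and> multiplicity w P h = pi_part w P l)"
proof -
  obtain c0 where c0: "christoffel c0" "conjugate c0 w" using assms(2) by blast
  obtain p x where px: "0 < p" "p < length w" "coprime p (length w)" "x < length w"
      "w = G (length w) p x 0 (length w)"
    using christ_struct[OF c0] by blast
  interpret S: setting "length w" p x w P k m
    by (unfold_locales) (use px assms in auto)
  show ?thesis by (rule S.main)
qed

end
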